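(* Let $n>1$ be an integer with prime factorization $n=\prod_{i=1}^{\ell}p_i^{a_i}$, where $p_1<p_2<\cdots<p_\ell$ are primes and each $a_i\ge 1$. Then $F_n=D_n$ if and only if \[ p_i-1=\prod_{j=1}^{i-1}p_j^{a_j}\quad\text{for all }1\le i\le \ell \] (for $i=1$ the empty product is $1$, so the condition says $p_1=2$).
   Context: For a composite integer $n$, let $d(n)$ denote the largest divisor of $n$ with $1<d(n)<n$. Define $f$ on integers $n>1$ by $f(n)=n-1$ if $n$ is prime and $f(n)=n-d(n)$ if $n$ is composite. Let $f^{(0)}(n)=n$ and $f^{(i)}=f\circ f^{(i-1)}$ for $i\ge1$. Since $f(m)<m$ for all $m>1$, iterating $f$ from $n$ eventually reaches $1$; define $F_n=\{n,f(n),f^{(2)}(n),\dots,1\}$ to be the set of all iterates up to and including the first occurrence of $1$. Let $D_n$ denote the set of all positive divisors of $n$. *)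

theory Defs
  imports "HOL-Computational_Algebra.Primes"
begin

definition lpd :: "nat \<Rightarrow> nat" where
  "lpd n = (GREATEST d. d dvd n \<and> 1 < d \<and> d < n)"

definition fmap :: "nat \<Rightarrow> nat" where
  "fmap n = (if prime n then n - 1 else n - lpd n)"

definition Fset :: "nat \<Rightarrow> nat set" where
  "Fset n = {(fmap ^^ i) n | i. i \<le> (LEAST k. (fmap ^^ k) n = 1)}"

definition Dset :: "nat \<Rightarrow> nat set" where
  "Dset n = {d. d dvd n}"

end

theory Submission
  imports Defs
begin
lemma pf_ne:
  fixes m :: nat assumes "m > 1" shows "prime_factors m \<noteq> {}"
proof -
  obtain p where "prime p" "p dvd m" using prime_factor_nat[of m] assms by auto
  then have "p \<in> prime_factors m" using assms by (auto simp: prime_factors_dvd)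
  then show ?thesis by auto
qed

definition sp :: "nat \<Rightarrow> nat" where "sp m = Min (prime_factors m)"

lemma sp_props:
  assumes "m > 1"
  shows "prime (sp m)" "sp m dvd m" "\<And>q. prime q \<Longrightarrow> q dvd m \<Longrightarrow> sp m \<le> q"
proof -
  have ne: "prime_factors m \<noteq> {}" using pf_ne[OF assms] .
  have fin: "finite (prime_factors m)" by simp
  have "sp m \<in> prime_factors m" unfolding sp_def using Min_in[OF fin ne] .
  then show "prime (sp m)" "sp m dvd m" by auto
  fix q assume "prime q" "q dvd m"
  then have "q \<in> prime_factors m" using assms by (auto simp: prime_factors_dvd)
  then show "sp m \<le> q" unfolding sp_def using fin by simp
qed

lemma lpd_eq:
  assumes "m > 1" "\<not> prime m"
  shows "lpd m = m div sp m"
  unfolding lpd_def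
proof (rule Greatest_equality)
  define s where "s = sp m"
  have p: "prime s" "s dvd m" using sp_props assms unfolding s_def by auto
  then obtain k where k: "m = s * k" by blast
  have p2: "s > 1" using p prime_gt_1_nat by blast
  have "k \<noteq> 1" using k assms(2) p(1) by auto
  moreover have "k \<noteq> 0" using k assms(1) by (cases k) auto
  ultimately have k1: "k > 1" by simp
  have "s * k div s = k" using p2 by simp
  then have d: "m div s = k" using k by simp
  have "k < s * k" using p2 k1 by simp
  then have "k < m" using k by simp
  then show "m div sp m dvd m \<and> 1 < m div sp m \<and> m div sp m < m" using d k1 k unfolding s_def[symmetric] by simp
next
  fix y assume y: "y dvd m \<and> 1 < y \<and> y < m"
  then obtain e where e: "m = y * e" by blast
  have "e \<noteq> 0" using y e by auto
  moreover have "e \<noteq> 1" using y e by auto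
  ultimately have "e > 1" by simp
  then obtain q where q: "prime q" "q dvd e" using prime_factor_nat[of e] by auto
  have "q dvd m" using q e by simp
  then have "sp m \<le> q" using sp_props(3) assms q by blast
  moreover have "q \<le> e" using q \<open>e>1\<close> by (simp add: dvd_imp_le)
  ultimately have "sp m \<le> e" by simp
  have p2: "sp m > 0" using sp_props(1)[OF assms(1)] prime_gt_0_nat by blast
  have "y * sp m \<le> y * e" using \<open>sp m \<le> e\<close> by simp
  then have "y * sp m \<le> m" using e by simp
  then show "y \<le> m div sp m" using p2 by (simp add: less_eq_div_iff_mult_less_eq)
qed

lemma fmap_eq:
  assumes "m > 1"
  shows "fmap m = (m div sp m) * (sp m - 1)"
proof (cases "prime m")
  case True
  then have "prime_factors m = {m}" by (simp add: prime_prime_factors)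
  then have "sp m = m" unfolding sp_def by simp
  then show ?thesis using True assms by (simp add: fmap_def)
next
  case False
  have d: "sp m dvd m" using sp_props assms by auto
  have p2: "sp m > 0" using sp_props(1)[OF assms(1)] prime_gt_0_nat by blast
  have "m = (m div sp m) * sp m" using d by simp
  then have "m - m div sp m = (m div sp m) * (sp m - 1)"
    by (metis diff_mult_distrib2 mult.right_neutral)
  then show ?thesis using False assms by (simp add: fmap_def lpd_eq)
qed

lemma fmap_bounds:
  assumes "m > 1"
  shows "0 < fmap m" "fmap m < m"
proof -
  define s where "s = sp m"
  have p: "prime s" "s dvd m" using sp_props assms unfolding s_def by auto
  then have p2: "s > 1" using prime_gt_1_nat by blast
  obtain k where k: "m = s * k" using p by blast
  have "k > 0" using k assms by (cases k) auto
  have "s * k div s = k" using p2 by simp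
  then have "m div s = k" using k by simp
  then have f: "fmap m = k * (s - 1)" using fmap_eq assms unfolding s_def by simp
  show "0 < fmap m" using f \<open>k>0\<close> p2 by simp
  have "k * (s - 1) < k * s" using \<open>k>0\<close> p2 by simp
  then show "fmap m < m" using f k by (simp add: mult.commute)
qed

function orb :: "nat \<Rightarrow> nat set" where
  "orb x = (if x \<le> 1 then {x} else insert x (orb (fmap x)))"
  by auto
termination by (relation "measure (\<lambda>x. x)") (auto simp: fmap_bounds)

declare orb.simps[simp del]

lemma orb_1[simp]: "orb 1 = {1}" by (simp add: orb.simps)
lemma orb_1'[simp]: "orb (Suc 0) = {Suc 0}" by (simp add: orb.simps)
lemma orb_gt1: "x > 1 \<Longrightarrow> orb x = insert x (orb (fmap x))" by (simp add: orb.simps)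

lemma iter_ex: "x \<ge> 1 \<Longrightarrow> \<exists>k. (fmap ^^ k) x = 1"
proof (induction x rule: less_induct)
  case (less x)
  show ?case
  proof (cases "x = 1")
    case True then show ?thesis by (rule_tac x=0 in exI) simp
  next
    case False
    then have "x > 1" using less by simp
    have "fmap x \<ge> 1" "fmap x < x" using fmap_bounds[OF \<open>x>1\<close>] by auto
    then obtain k where "(fmap ^^ k) (fmap x) = 1" using less.IH by blast
    then show ?thesis by (rule_tac x="Suc k" in exI) (simp add: funpow_swap1)
  qed
qed

lemma Fset_orb_gen: "x \<ge> 1 \<Longrightarrow> {(fmap ^^ i) x | i. i \<le> (LEAST k. (fmap ^^ k) x = 1)} = orb x"
proof (induction x rule: less_induct)
  case (less x)
  show ?case
  proof (cases "x = 1")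
    case True
    then have "(LEAST k. (fmap ^^ k) x = 1) = 0" by (simp add: Least_eq_0)
    then show ?thesis using True by simp
  next
    case False
    then have x1: "x > 1" using less by simp
    have fb: "fmap x \<ge> 1" "fmap x < x" using fmap_bounds[OF x1] by auto
    obtain k where k: "(fmap ^^ k) x = 1" using iter_ex less by blast
    have L: "(LEAST k. (fmap ^^ k) x = 1) = Suc (LEAST m. (fmap ^^ m) (fmap x) = 1)"
      using Least_Suc[of "\<lambda>k. (fmap ^^ k) x = 1", OF k] False by (simp add: funpow_swap1)
    define T where "T = (LEAST m. (fmap ^^ m) (fmap x) = 1)"
    have "{(fmap ^^ i) x | i. i \<le> Suc T} = insert x {(fmap ^^ i) (fmap x) | i. i \<le> T}"
    proof (rule set_eqI, rule iffI)
      fix y assume "y \<in> {(fmap ^^ i) x | i. i \<le> Suc T}"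
      then obtain i where i: "i \<le> Suc T" "y = (fmap ^^ i) x" by blast
      show "y \<in> insert x {(fmap ^^ i) (fmap x) | i. i \<le> T}"
      proof (cases i)
        case 0 then show ?thesis using i by simp
      next
        case (Suc j) then show ?thesis using i by (auto simp: funpow_swap1)
      qed
    next
      fix y assume "y \<in> insert x {(fmap ^^ i) (fmap x) | i. i \<le> T}"
      then show "y \<in> {(fmap ^^ i) x | i. i \<le> Suc T}"
      proof
        assume "y = x" then show ?thesis by (rule_tac CollectI, rule_tac x=0 in exI) simp
      next
        assume "y \<in> {(fmap ^^ i) (fmap x) | i. i \<le> T}"
        then obtain i where "i \<le> T" "y = (fmap ^^ i) (fmap x)" by blast
        then show ?thesis by (rule_tac CollectI, rule_tac x="Suc i" in exI) (simp add: funpow_swap1)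
      qed
    qed
    then show ?thesis using L less.IH[OF fb(2) fb(1)] orb_gt1[OF x1] unfolding T_def by simp
  qed
qed

lemma Fset_orb: "n \<ge> 1 \<Longrightarrow> Fset n = orb n"
  unfolding Fset_def using Fset_orb_gen by simp

lemma orb_basic: "x \<ge> 1 \<Longrightarrow> orb x \<subseteq> {1..x} \<and> x \<in> orb x \<and> 1 \<in> orb x"
proof (induction x rule: less_induct)
  case (less x)
  show ?case
  proof (cases "x = 1")
    case True then show ?thesis by simp
  next
    case False
    then have x1: "x > 1" using less by simp
    have fb: "fmap x \<ge> 1" "fmap x < x" using fmap_bounds[OF x1] by auto
    show ?thesis using less.IH[OF fb(2) fb(1)] orb_gt1[OF x1] fb x1 by auto
  qed
qed

lemma orb_chain: "x \<ge> 1 \<Longrightarrow> y \<in> orb x \<Longrightarrow> orb y = {z \<in> orb x. z \<le> y}"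
proof (induction x rule: less_induct)
  case (less x)
  show ?case
  proof (cases "x = 1")
    case True then show ?thesis using less by auto
  next
    case False
    then have x1: "x > 1" using less by simp
    have fb: "fmap x \<ge> 1" "fmap x < x" using fmap_bounds[OF x1] by auto
    show ?thesis
    proof (cases "y = x")
      case True then show ?thesis using orb_basic[OF less.prems(1)] by auto
    next
      case False
      then have y: "y \<in> orb (fmap x)" using less.prems orb_gt1[OF x1] by auto
      have "y \<le> fmap x" using orb_basic[OF fb(1)] y by auto
      then show ?thesis using less.IH[OF fb(2) fb(1) y] orb_gt1[OF x1] fb by auto
    qed
  qed
qed

lemma orb_closed: "x \<ge> 1 \<Longrightarrow> y \<in> orb x \<Longrightarrow> y > 1 \<Longrightarrow> fmap y \<in> orb x"
proof -
  assume a: "x \<ge> 1" "y \<in> orb x" "y > 1"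
  have "fmap y \<in> orb y" using orb_gt1[OF a(3)] orb_basic[of "fmap y"] fmap_bounds[OF a(3)] by auto
  then show ?thesis using orb_chain[OF a(1,2)] by auto
qed

lemma sp_prime_power:
  assumes "prime p" "k \<ge> 1" shows "sp (p ^ k) = p"
proof -
  have g: "p ^ k > 1" using assms prime_gt_1_nat[OF assms(1)] by (intro one_less_power) auto
  have "prime (sp (p^k))" "sp (p^k) dvd p^k" using sp_props[OF g] by auto
  then show ?thesis using assms by (metis prime_dvd_power primes_dvd_imp_eq)
qed

lemma fmap_prime_power:
  assumes "prime p" "k \<ge> 1" shows "fmap (p ^ k) = p ^ (k - 1) * (p - 1)"
proof -
  have g: "p ^ k > 1" using assms prime_gt_1_nat[OF assms(1)] by (intro one_less_power) auto
  have "p ^ k div p = p ^ (k - 1)" using assms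
    using prime_gt_0_nat[OF assms(1)] by (cases k) auto
  then show ?thesis using fmap_eq[OF g] sp_prime_power[OF assms] by simp
qed

lemma sp_mult_power:
  assumes "prime p" "d > 1" "\<forall>q. prime q \<longrightarrow> q dvd d \<longrightarrow> q < p"
  shows "sp (d * p ^ k) = sp d"
proof -
  have pos: "p ^ k > 0" using assms prime_gt_0_nat by simp
  have g: "d * p ^ k > 1" proof -
    have "d * 1 \<le> d * p ^ k" using Suc_leI[OF pos] by (intro mult_le_mono2) simp
    then show ?thesis using assms(2) by linarith
  qed
  have s: "prime (sp d)" "sp d dvd d" using sp_props[OF assms(2)] by auto
  have "sp d < p" using s assms by blast
  have le: "sp (d * p^k) \<le> sp d" using sp_props(3)[OF g s(1)] s by simp
  have t: "prime (sp (d*p^k))" "sp (d*p^k) dvd d * p^k" using sp_props[OF g] by auto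
  show ?thesis
  proof (cases "sp (d*p^k) dvd d")
    case True then show ?thesis using sp_props(3)[OF assms(2) t(1)] le by simp
  next
    case False
    then have "sp (d*p^k) dvd p ^ k" using t prime_dvd_mult_iff by blast
    then have "sp (d*p^k) = p" using t assms(1) by (metis prime_dvd_power primes_dvd_imp_eq)
    then show ?thesis using le \<open>sp d < p\<close> by simp
  qed
qed

lemma fmap_mult_power:
  assumes "prime p" "d > 1" "\<forall>q. prime q \<longrightarrow> q dvd d \<longrightarrow> q < p"
  shows "fmap (d * p ^ k) = fmap d * p ^ k"
proof -
  have pos: "p ^ k > 0" using assms prime_gt_0_nat by simp
  have g: "d * p ^ k > 1" proof -
    have "d * 1 \<le> d * p ^ k" using Suc_leI[OF pos] by (intro mult_le_mono2) simp
    then show ?thesis using assms(2) by linarith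
  qed
  have s: "sp d dvd d" using sp_props[OF assms(2)] by auto
  have "d * p ^ k div sp d = d div sp d * p ^ k" using s by (simp add: dvd_div_mult)
  then show ?thesis using fmap_eq[OF g] fmap_eq[OF assms(2)] sp_mult_power[OF assms] by simp
qed

lemma fmap_primes_less:
  assumes "prime p" "d > 1" "\<forall>q. prime q \<longrightarrow> q dvd d \<longrightarrow> q < p"
  shows "\<forall>q. prime q \<longrightarrow> q dvd fmap d \<longrightarrow> q < p"
proof (intro allI impI)
  fix q assume q: "prime q" "q dvd fmap d"
  have s: "prime (sp d)" "sp d dvd d" using sp_props[OF assms(2)] by auto
  have "sp d < p" using s assms by blast
  have "q dvd d div sp d \<or> q dvd sp d - 1" using q fmap_eq[OF assms(2)] prime_dvd_mult_iff by metis
  then show "q < p"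
  proof
    assume "q dvd d div sp d"
    then have "q dvd d" using s by (metis dvd_div_mult_self dvd_mult2)
    then show ?thesis using assms q by blast
  next
    assume "q dvd sp d - 1"
    moreover have "sp d - 1 > 0" using s prime_gt_1_nat by simp
    ultimately have "q \<le> sp d - 1" by (simp add: dvd_imp_le)
    then show ?thesis using \<open>sp d < p\<close> by simp
  qed
qed

lemma orb_decomp:
  assumes "prime p" "d \<ge> 1" "\<forall>q. prime q \<longrightarrow> q dvd d \<longrightarrow> q < p"
  shows "orb (d * p ^ k) = (\<lambda>x. x * p ^ k) ` orb d \<union> orb (p ^ k)"
  using assms(2,3)
proof (induction d rule: less_induct)
  case (less d)
  have pos: "p ^ k \<ge> 1" using assms prime_gt_0_nat by (simp add: Suc_leI)
  show ?case
  proof (cases "d = 1")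
    case True then show ?thesis using orb_basic[OF pos] by auto
  next
    case False
    then have d1: "d > 1" using less by simp
    have fb: "fmap d \<ge> 1" "fmap d < d" using fmap_bounds[OF d1] by auto
    have g: "d * p ^ k > 1" proof -
      have "d * 1 \<le> d * p ^ k" using pos by (intro mult_le_mono2) simp
      then show ?thesis using d1 by linarith
    qed
    have IH: "orb (fmap d * p ^ k) = (\<lambda>x. x * p ^ k) ` orb (fmap d) \<union> orb (p ^ k)"
      using less.IH[OF fb(2) fb(1) fmap_primes_less[OF assms(1) d1 less.prems(2)]] .
    show ?thesis using orb_gt1[OF g] orb_gt1[OF d1] IH fmap_mult_power[OF assms(1) d1 less.prems(2)] by auto
  qed
qed

definition C' :: "nat \<Rightarrow> bool" where
  "C' n = (\<forall>p\<in>prime_factors n. p - 1 = (\<Prod>q\<in>{q\<in>prime_factors n. q < p}. q ^ multiplicity q n))"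

lemma cond_equiv:
  fixes n :: nat
  defines "ps \<equiv> sorted_list_of_set (prime_factors n)"
  shows "(\<forall>i < length ps. ps ! i - 1 = (\<Prod>j<i. (ps ! j) ^ multiplicity (ps ! j) n)) \<longleftrightarrow> C' n"
proof -
  have fin: "finite (prime_factors n)" by simp
  have set: "set ps = prime_factors n" unfolding ps_def using fin by simp
  have dist: "distinct ps" unfolding ps_def by simp
  have ss: "sorted_wrt (<) ps" unfolding ps_def by (simp add: strict_sorted_list_of_set)
  have img: "{q\<in>prime_factors n. q < ps ! i} = (nth ps) ` {..<i}" if i: "i < length ps" for i
  proof (rule set_eqI, rule iffI)
    fix q assume "q \<in> {q\<in>prime_factors n. q < ps ! i}"
    then have q: "q \<in> set ps" "q < ps ! i" using set by auto
    then obtain j where j: "j < length ps" "q = ps ! j" by (auto simp: in_set_conv_nth)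
    have "j < i"
    proof (rule ccontr)
      assume "\<not> j < i"
      then have "i = j \<or> i < j" by auto
      then show False using sorted_wrt_nth_less[OF ss, of i j] j q by auto
    qed
    then show "q \<in> (nth ps) ` {..<i}" using j by auto
  next
    fix q assume "q \<in> (nth ps) ` {..<i}"
    then obtain j where j: "j < i" "q = ps ! j" by auto
    then have "q < ps ! i" using sorted_wrt_nth_less[OF ss j(1) i] by simp
    moreover have "q \<in> prime_factors n"
    proof -
      have "j < length ps" using j i by simp
      then have "q \<in> set ps" using j by simp
      then show ?thesis using set by simp
    qed
    ultimately show "q \<in> {q\<in>prime_factors n. q < ps ! i}" by simp
  qed
  have prodeq: "(\<Prod>q\<in>{q\<in>prime_factors n. q < ps ! i}. q ^ multiplicity q n) = (\<Prod>j<i. (ps ! j) ^ multiplicity (ps ! j) n)"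
    if i: "i < length ps" for i
  proof -
    have "inj_on (nth ps) {..<i}" using inj_on_nth[OF dist] i by auto
    then show ?thesis unfolding img[OF i] by (simp add: prod.reindex)
  qed
  show ?thesis
  proof
    assume A: "\<forall>i < length ps. ps ! i - 1 = (\<Prod>j<i. (ps ! j) ^ multiplicity (ps ! j) n)"
    show "C' n" unfolding C'_def
    proof
      fix p assume "p \<in> prime_factors n"
      then have "p \<in> set ps" using set by simp
      then obtain i where i: "i < length ps" "p = ps ! i" by (auto simp: in_set_conv_nth)
      show "p - 1 = (\<Prod>q\<in>{q\<in>prime_factors n. q < p}. q ^ multiplicity q n)"
        using A i prodeq[OF i(1)] by simp
    qed
  next
    assume "C' n"
    then show "\<forall>i < length ps. ps ! i - 1 = (\<Prod>j<i. (ps ! j) ^ multiplicity (ps ! j) n)"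
    proof (intro allI impI)
      fix i assume i: "i < length ps"
      then have "ps ! i \<in> set ps" by simp
      then have "ps ! i \<in> prime_factors n" using set by simp
      then show "ps ! i - 1 = (\<Prod>j<i. (ps ! j) ^ multiplicity (ps ! j) n)"
        using \<open>C' n\<close> prodeq[OF i] unfolding C'_def by simp
    qed
  qed
qed

locale dec =
  fixes n :: nat
  assumes n1: "n > 1"
begin

definition "P = Max (prime_factors n)"
definition "a = multiplicity P n"
definition "m = n div P ^ a"

lemma facts:
  shows "prime P" "a \<ge> 1" "n = m * P ^ a" "m \<ge> 1" "m < n" "\<not> P dvd m"
    "prime_factors m = prime_factors n - {P}"
    "\<forall>q. prime q \<longrightarrow> q dvd m \<longrightarrow> q < P"
    "\<And>q. prime q \<Longrightarrow> q \<noteq> P \<Longrightarrow> multiplicity q m = multiplicity q n"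
    "P \<in> prime_factors n"
proof -
  have ne: "prime_factors n \<noteq> {}" using pf_ne[OF n1] .
  have fin: "finite (prime_factors n)" by simp
  show PF: "P \<in> prime_factors n" unfolding P_def using Min_in[OF fin ne] Max_in[OF fin ne] by simp
  then show pP: "prime P" by auto
  have "P dvd n" using PF by auto
  moreover have "n \<noteq> 0" using n1 by simp
  ultimately have "multiplicity P n > 0" using prime_multiplicity_gt_zero_iff[of P n] prime_imp_prime_elem[OF pP] by simp
  then show a1: "a \<ge> 1" unfolding a_def by simp
  show nm: "n = m * P ^ a" unfolding m_def a_def using multiplicity_dvd[of P n] by simp
  then have nm': "m * P ^ a = n" by (rule sym)
  show m1: "m \<ge> 1"
  proof (rule ccontr)
    assume "\<not> m \<ge> 1"
    then have "m * P ^ a = 0" by simp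
    then show False using nm' n1 by simp
  qed
  have "P ^ a > 1" using a1 prime_gt_1_nat[OF pP] by (intro one_less_power) auto
  then have "m < P ^ a * m" using m1 by (intro n_less_m_mult_n) auto
  then have "m < m * P ^ a" by (simp only: mult.commute)
  then show "m < n" using nm' by simp
  show nd: "\<not> P dvd m" unfolding m_def a_def by (rule multiplicity_decompose) (use n1 pP not_prime_unit in auto)
  have pow0: "P ^ a \<noteq> 0" using pP by simp
  show mult: "multiplicity q m = multiplicity q n" if q: "prime q" "q \<noteq> P" for q
  proof -
    have "multiplicity q n = multiplicity q m + multiplicity q (P ^ a)"
      using nm' prime_elem_multiplicity_mult_distrib[of q m "P^a"] q m1 pow0 by simp
    then show ?thesis using multiplicity_distinct_prime_power[OF q(1) pP q(2)] by simp
  qed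
  have pfm: "q \<in> prime_factors m \<longleftrightarrow> q \<in> prime_factors n \<and> q \<noteq> P" for q
  proof
    assume "q \<in> prime_factors m"
    then have q: "prime q" "q dvd m" by auto
    from q(2) have "q dvd m * P ^ a" by (rule dvd_mult2)
    then have "q dvd n" using nm' by simp
    moreover have "q \<noteq> P" using q nd by auto
    ultimately show "q \<in> prime_factors n \<and> q \<noteq> P" using q n1 by (auto simp: prime_factors_dvd)
  next
    assume "q \<in> prime_factors n \<and> q \<noteq> P"
    then have q: "prime q" "q dvd n" "q \<noteq> P" by auto
    then have "q dvd m * P ^ a" using nm' by simp
    then have "q dvd m \<or> q dvd P ^ a" using prime_dvd_mult_iff[OF q(1)] by simp
    moreover have "\<not> q dvd P ^ a"
    proof
      assume "q dvd P ^ a"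
      then have "q dvd P" using prime_dvd_power q(1) by blast
      then show False using primes_dvd_imp_eq[OF q(1) pP] q(3) by simp
    qed
    ultimately show "q \<in> prime_factors m" using q m1 by (auto simp: prime_factors_dvd)
  qed
  then show "prime_factors m = prime_factors n - {P}" by auto
  show "\<forall>q. prime q \<longrightarrow> q dvd m \<longrightarrow> q < P"
  proof (intro allI impI)
    fix q assume q: "prime q" "q dvd m"
    then have "q \<in> prime_factors m" using m1 by (auto simp: prime_factors_dvd)
    then have "q \<in> prime_factors n" "q \<noteq> P" using pfm by auto
    moreover have "q \<le> P" unfolding P_def using fin \<open>q \<in> prime_factors n\<close> by simp
    ultimately show "q < P" by simp
  qed
qed

lemma cond_step: "C' n \<longleftrightarrow> C' m \<and> P - 1 = m"
proof -
  note F = facts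
  have pfm: "q \<in> prime_factors m \<longleftrightarrow> q \<in> prime_factors n \<and> q \<noteq> P" for q
    unfolding F(7) by blast
  have lessP: "q < P" if "q \<in> prime_factors m" for q
  proof -
    have "prime q" "q dvd m" using that by auto
    then show ?thesis using F(8) by blast
  qed
  have sub: "{q\<in>prime_factors n. q < p} = {q\<in>prime_factors m. q < p}" if p: "p \<in> prime_factors m" for p
  proof (rule set_eqI, rule iffI)
    fix q assume "q \<in> {q\<in>prime_factors n. q < p}"
    then have q: "q \<in> prime_factors n" "q < p" by auto
    have "p < P" using lessP[OF p] .
    then have "q \<noteq> P" using q(2) by simp
    then have "q \<in> prime_factors m" using pfm q(1) by blast
    then show "q \<in> {q\<in>prime_factors m. q < p}" using q(2) by blast
  next
    fix q assume "q \<in> {q\<in>prime_factors m. q < p}"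
    then have q: "q \<in> prime_factors m" "q < p" by auto
    then have "q \<in> prime_factors n" using pfm by blast
    then show "q \<in> {q\<in>prime_factors n. q < p}" using q(2) by blast
  qed
  have multeq: "q ^ multiplicity q n = q ^ multiplicity q m" if "q \<in> prime_factors m" for q
  proof -
    have "prime q" using that by auto
    moreover have "q \<noteq> P" using pfm that by blast
    ultimately show ?thesis using F(9) by simp
  qed
  have eqp: "(\<Prod>q\<in>{q\<in>prime_factors n. q < p}. q ^ multiplicity q n) = (\<Prod>q\<in>{q\<in>prime_factors m. q < p}. q ^ multiplicity q m)"
    if "p \<in> prime_factors m" for p
    unfolding sub[OF that] by (rule prod.cong) (use multeq in auto)
  have subP: "{q\<in>prime_factors n. q < P} = prime_factors m"
  proof (rule set_eqI, rule iffI)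
    fix q assume "q \<in> {q\<in>prime_factors n. q < P}"
    then show "q \<in> prime_factors m" using pfm by auto
  next
    fix q assume q: "q \<in> prime_factors m"
    then show "q \<in> {q\<in>prime_factors n. q < P}" using pfm lessP[OF q] by blast
  qed
  have "(\<Prod>q\<in>{q\<in>prime_factors n. q < P}. q ^ multiplicity q n) = (\<Prod>q\<in>prime_factors m. q ^ multiplicity q m)"
    unfolding subP by (rule prod.cong) (use multeq in auto)
  also have "\<dots> = m" using F(4) by (intro prime_factorization_nat[symmetric]) simp
  finally have eqP: "(\<Prod>q\<in>{q\<in>prime_factors n. q < P}. q ^ multiplicity q n) = m" .
  have pfn: "prime_factors n = insert P (prime_factors m)" using pfm F(10) by blast
  define Q where "Q (k::nat) (p::nat) = (p - 1 = (\<Prod>q\<in>{q\<in>prime_factors k. q < p}. q ^ multiplicity q k))" for k p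
  have c1: "C' n \<longleftrightarrow> Q n P \<and> (\<forall>p\<in>prime_factors m. Q n p)"
    unfolding C'_def Q_def by (subst (1) pfn) simp
  have c2: "Q n P \<longleftrightarrow> P - 1 = m" unfolding Q_def eqP ..
  have c3: "(\<forall>p\<in>prime_factors m. Q n p) \<longleftrightarrow> C' m" unfolding C'_def Q_def using eqp by simp
  show ?thesis using c1 c2 c3 by blast
qed

end

lemma divs:
  fixes m P a :: nat
  assumes pP: "prime P" and nd: "\<not> P dvd m" and m1: "m \<ge> 1"
  shows "Dset (m * P ^ a) = {d * P ^ j | d j. d dvd m \<and> j \<le> a}"
proof (rule set_eqI, rule iffI)
  fix x assume "x \<in> Dset (m * P ^ a)"
  then have x: "x dvd m * P ^ a" by (simp add: Dset_def)
  have "m * P ^ a \<noteq> 0" using m1 prime_gt_0_nat[OF pP] by simp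
  then have "x \<noteq> 0" using x by (rule_tac ccontr) auto
  define j where "j = multiplicity P x"
  have nu: "\<not> is_unit P" using pP not_prime_unit by blast
  obtain y where y0: "x = P ^ multiplicity P x * y" "\<not> P dvd y"
    using multiplicity_decompose'[OF \<open>x \<noteq> 0\<close> nu] by blast
  have y: "x = P ^ j * y" "\<not> P dvd y" using y0 unfolding j_def[symmetric] by auto
  have "coprime y P" using prime_imp_coprime[OF pP y(2)] by (simp only: coprime_commute)
  then have cy: "coprime y (P ^ a)" by simp
  have "y dvd x" using y(1) by simp
  then have "y dvd m * P ^ a" using x by (rule dvd_trans)
  then have ym: "y dvd m" using coprime_dvd_mult_left_iff[OF cy] by simp
  have cm: "coprime (P ^ j) m" using prime_imp_coprime[OF pP nd] by simp
  have "P ^ j dvd x" using y(1) by simp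
  then have "P ^ j dvd m * P ^ a" using x by (rule dvd_trans)
  then have "P ^ j dvd P ^ a * m" by (simp add: mult.commute)
  then have "P ^ j dvd P ^ a" using coprime_dvd_mult_left_iff[OF cm] by simp
  then have "j \<le> a" using power_dvd_imp_le prime_gt_1_nat[OF pP] by blast
  moreover have "x = y * P ^ j" using y(1) by simp
  ultimately show "x \<in> {d * P ^ j | d j. d dvd m \<and> j \<le> a}" using ym by blast
next
  fix x assume "x \<in> {d * P ^ j | d j. d dvd m \<and> j \<le> a}"
  then obtain d j where "x = d * P ^ j" "d dvd m" "j \<le> a" by blast
  then show "x \<in> Dset (m * P ^ a)" by (simp add: Dset_def mult_dvd_mono le_imp_power_dvd)
qed

lemma orb_ppow:
  fixes m P :: nat
  assumes pP: "prime P" and m1: "m \<ge> 1" and om: "orb m = Dset m" and Pm: "P - 1 = m"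
  shows "orb (P ^ k) = insert (P ^ k) {d * P ^ j | d j. d dvd m \<and> j < k}"
proof (induction k)
  case 0 then show ?case by simp
next
  case (Suc k)
  have lt: "\<forall>q. prime q \<longrightarrow> q dvd m \<longrightarrow> q < P"
  proof (intro allI impI)
    fix q assume "prime q" "q dvd m"
    then have "q \<le> m" using m1 by (simp add: dvd_imp_le)
    then show "q < P" using Pm prime_gt_1_nat[OF pP] by linarith
  qed
  have g: "P ^ Suc k > 1" using prime_gt_1_nat[OF pP] by (intro one_less_power) auto
  have f: "fmap (P ^ Suc k) = m * P ^ k" using fmap_prime_power[OF pP, of "Suc k"] Pm by simp
  have "orb (P ^ Suc k) = insert (P ^ Suc k) (orb (m * P ^ k))" using orb_gt1[OF g] f by simp
  also have "orb (m * P ^ k) = (\<lambda>x. x * P ^ k) ` Dset m \<union> insert (P ^ k) {d * P ^ j | d j. d dvd m \<and> j < k}"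
    using orb_decomp[OF pP m1 lt, of k] om Suc.IH by simp
  also have "\<dots> = {d * P ^ j | d j. d dvd m \<and> j < Suc k}"
  proof (rule set_eqI, rule iffI)
    fix x assume "x \<in> (\<lambda>x. x * P ^ k) ` Dset m \<union> insert (P ^ k) {d * P ^ j | d j. d dvd m \<and> j < k}"
    then show "x \<in> {d * P ^ j | d j. d dvd m \<and> j < Suc k}"
    proof (elim UnE insertE)
      assume "x \<in> (\<lambda>x. x * P ^ k) ` Dset m" then show ?thesis by (auto simp: Dset_def)
    next
      assume "x = P ^ k" then show ?thesis by (rule_tac CollectI, rule_tac x=1 in exI, rule_tac x=k in exI) simp
    next
      assume "x \<in> {d * P ^ j | d j. d dvd m \<and> j < k}"
      then obtain d j where "x = d * P ^ j" "d dvd m" "j < k" by blast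
      then show ?thesis by (rule_tac CollectI, rule_tac x=d in exI, rule_tac x=j in exI) simp
    qed
  next
    fix x assume "x \<in> {d * P ^ j | d j. d dvd m \<and> j < Suc k}"
    then obtain d j where dj: "x = d * P ^ j" "d dvd m" "j < Suc k" by blast
    show "x \<in> (\<lambda>x. x * P ^ k) ` Dset m \<union> insert (P ^ k) {d * P ^ j | d j. d dvd m \<and> j < k}"
    proof (cases "j = k")
      case True then show ?thesis using dj by (auto simp: Dset_def)
    next
      case False then have "j < k" using dj by simp
      then show ?thesis using dj by blast
    qed
  qed
  finally show ?case .
qed

lemma main_ind: "n \<ge> 1 \<Longrightarrow> (orb n = Dset n \<longleftrightarrow> C' n)"
proof (induction n rule: less_induct)
  case (less n)
  show ?case
  proof (cases "n = 1")
    case True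
    have "Dset 1 = {1}" by (auto simp: Dset_def)
    moreover have "C' 1" by (simp add: C'_def)
    ultimately show ?thesis using True by simp
  next
    case False
    then have n1: "n > 1" using less by simp
    interpret dec n using n1 by unfold_locales
    note F = facts
    have nm': "m * P ^ a = n" by (rule F(3)[symmetric])
    have IH: "orb m = Dset m \<longleftrightarrow> C' m" using less.IH[OF F(5) F(4)] .
    have dec: "orb n = (\<lambda>x. x * P ^ a) ` orb m \<union> orb (P ^ a)"
      using orb_decomp[OF F(1) F(4) F(8), of a] nm' by simp
    have Pa: "P ^ a > 0" using F(1) prime_gt_0_nat by simp
    have n0: "n \<ge> 1" using n1 by simp
    show ?thesis
    proof
      assume O: "orb n = Dset n"
      have om: "orb m = Dset m"
      proof (rule set_eqI, rule iffI)
        fix x assume "x \<in> orb m"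
        then have "x * P ^ a \<in> orb n" using dec by auto
        then have "x * P ^ a dvd m * P ^ a" using O nm' by (simp add: Dset_def)
        then show "x \<in> Dset m" using Pa prime_gt_0_nat[OF F(1)] by (simp add: Dset_def)
      next
        fix x assume "x \<in> Dset m"
        then have xd: "x dvd m" by (simp add: Dset_def)
        then have "x \<noteq> 0" using F(4) by auto
        have "x * P ^ a dvd m * P ^ a" using xd by (rule mult_dvd_mono) simp
        then have "x * P ^ a \<in> Dset n" using nm' by (simp add: Dset_def)
        then have "x * P ^ a \<in> (\<lambda>x. x * P ^ a) ` orb m \<union> orb (P ^ a)" using O dec by simp
        then show "x \<in> orb m"
        proof
          assume "x * P ^ a \<in> (\<lambda>x. x * P ^ a) ` orb m"
          then obtain y where "y \<in> orb m" "x * P ^ a = y * P ^ a" by auto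
          then show ?thesis using Pa prime_gt_0_nat[OF F(1)] by simp
        next
          assume "x * P ^ a \<in> orb (P ^ a)"
          then have "x * P ^ a \<le> P ^ a" using orb_basic[of "P ^ a"] Pa by auto
          then have "x = 1" using Pa \<open>x \<noteq> 0\<close> mult_le_cancel2[of x "P ^ a" 1] prime_gt_0_nat[OF F(1)] by auto
          then show ?thesis using orb_basic F(4) by auto
        qed
      qed
      have "P dvd n" using F(10) by auto
      then have Pn: "P \<in> orb n" using O by (simp add: Dset_def)
      have "fmap P = P - 1" using F(1) by (simp add: fmap_def)
      moreover have "P > 1" using F(1) prime_gt_1_nat by blast
      ultimately have "P - 1 \<in> orb n" using orb_closed[OF n0 Pn] by simp
      then have "P - 1 dvd m * P ^ a" using O nm' by (simp add: Dset_def)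
      moreover have "coprime (P - 1) (P ^ a)"
      proof -
        have "coprime (P - 1) P" by (rule coprime_diff_one_left_nat) (use prime_gt_0_nat[OF F(1)] in simp)
        then show ?thesis by simp
      qed
      ultimately have "P - 1 dvd m" using coprime_dvd_mult_left_iff by blast
      then have le: "P - 1 \<le> m" using F(4) by (simp add: dvd_imp_le)
      have "P - 1 = m"
      proof (rule ccontr)
        assume "P - 1 \<noteq> m"
        then have "P \<le> m" using le by simp
        moreover have "P \<noteq> m" using F(6) by auto
        ultimately have "P < m" by simp
        have "m dvd m * P ^ a" by simp
        then have "m \<in> orb n" using O nm' by (simp add: Dset_def)
        then have "orb m = {z \<in> orb n. z \<le> m}" using orb_chain[OF n0] by blast
        then have "P \<in> orb m" using Pn \<open>P < m\<close> by simp
        then show False using om F(6) by (simp add: Dset_def)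
      qed
      then show "C' n" using cond_step om IH by simp
    next
      assume "C' n"
      then have cm: "C' m" and Pm: "P - 1 = m" using cond_step by auto
      have om: "orb m = Dset m" using IH cm by simp
      have "orb n = (\<lambda>x. x * P ^ a) ` Dset m \<union> insert (P ^ a) {d * P ^ j | d j. d dvd m \<and> j < a}"
        using dec om orb_ppow[OF F(1) F(4) om Pm, of a] by simp
      also have "\<dots> = {d * P ^ j | d j. d dvd m \<and> j \<le> a}"
      proof (rule set_eqI, rule iffI)
        fix x assume "x \<in> (\<lambda>x. x * P ^ a) ` Dset m \<union> insert (P ^ a) {d * P ^ j | d j. d dvd m \<and> j < a}"
        then show "x \<in> {d * P ^ j | d j. d dvd m \<and> j \<le> a}"
        proof (elim UnE insertE)
          assume "x \<in> (\<lambda>x. x * P ^ a) ` Dset m" then show ?thesis by (auto simp: Dset_def)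
        next
          assume "x = P ^ a" then show ?thesis by (rule_tac CollectI, rule_tac x=1 in exI, rule_tac x=a in exI) simp
        next
          assume "x \<in> {d * P ^ j | d j. d dvd m \<and> j < a}"
          then obtain d j where "x = d * P ^ j" "d dvd m" "j < a" by blast
          then show ?thesis by (rule_tac CollectI, rule_tac x=d in exI, rule_tac x=j in exI) simp
        qed
      next
        fix x assume "x \<in> {d * P ^ j | d j. d dvd m \<and> j \<le> a}"
        then obtain d j where dj: "x = d * P ^ j" "d dvd m" "j \<le> a" by blast
        show "x \<in> (\<lambda>x. x * P ^ a) ` Dset m \<union> insert (P ^ a) {d * P ^ j | d j. d dvd m \<and> j < a}"
        proof (cases "j = a")
          case True then show ?thesis using dj by (auto simp: Dset_def)
        next
          case False then have "j < a" using dj by simp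
          then show ?thesis using dj by blast
        qed
      qed
      also have "\<dots> = Dset n" using divs[OF F(1) F(6) F(4), of a] nm' by simp
      finally show "orb n = Dset n" .
    qed
  qed
qed

theorem lemma2:
  fixes n :: nat
  assumes "n > 1"
  defines "ps \<equiv> sorted_list_of_set (prime_factors n)"
  shows "Fset n = Dset n \<longleftrightarrow>
         (\<forall>i < length ps. ps ! i - 1 = (\<Prod>j<i. (ps ! j) ^ multiplicity (ps ! j) n))"
  using Fset_orb[of n] main_ind[of n] cond_equiv[of n] assms unfolding ps_def by simp

end
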